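(* Let $\mathcal{S}$ be a discrete state space and $\{X_n\}_{n\in\mathbb{N}_0}$ a Markov chain on $\mathcal{S}$ with transition matrix $H$ satisfying $H_{ii}=0$ for all $i$. For each $i\in\mathcal{S}$ let $p_i\in(0,1)$, $q_i=1-p_i$, $\lambda_i=p_i/q_i$. Let $Z,Z_1,Z_2,\dots$ be i.i.d. positive-integer-valued random variables. Let $\mathcal{Y}$ be a semi-Markov chain of type B: $\mathcal{Y}(t)=X_n$ for $T_n\le t<T_{n+1}$, $t\in\mathbb{N}_0$, with $T_0=0$, $T_n=\sum_{k=0}^{n-1}J_k$, where, conditionally on $X_k=i$, the waiting time has the law of $1+\sum_{j=1}^{M-1}Z_j$ with $M$ independent of the $Z_j$ and $P(M=r)=p_iq_i^{r-1}$, $r\in\mathbb{N}$; equivalently $\mathbb{E}(u^{J_k}\mid X_k=i)=\dfrac{p_iu}{1-q_i\mathbb{E}u^Z}$. Let $\gamma(t)=\inf\{k\in\mathbb{N}:\mathcal{Y}(t-k)\ne\mathcal{Y}(t)\}$, $\gamma(0)=1$, and $p_{ij}(t)=P(\mathcal{Y}(t)=j\mid\mathcal{Y}(0)=i,\gamma(0)=1)$ for $i,j\in\mathcal{S}$, $t\in\mathbb{N}_0$, with $p_{ij}(t)=0$ for $t<0$. Then, with $p_{ij}(0)=\delta_{ij}$, the functions $p_{ij}$ solve, for all $t\in\mathbb{N}_0$, $$\sum_{\tau=0}^\infty\bigl(p_{ij}(t)-p_{ij}(t-\tau)\bigr)P(Z=\tau)-P(Z>t)\,p_{ij}(0)=\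sum_{l\in\mathcal{S}}\lambda_i\bigl(H_{il}\,p_{lj}(t-1)-\delta_{il}\,p_{lj}(t)\bigr)+\lambda_i\,p_{ij}(0)\,\delta_{0t}.$$
   Context: $\delta$ denotes the Kronecker delta; $\mathbb{N}_0=\mathbb{N}\cup\{0\}$. The conditional law of $J_k$ given $X_k=i$ depends only on $i$. *)

theory Defs
  imports "HOL-Probability.Probability"
begin

fun sumZ :: "nat pmf \<Rightarrow> nat \<Rightarrow> nat pmf" where
  "sumZ Z 0 = return_pmf 0"
| "sumZ Z (Suc m) = bind_pmf Z (\<lambda>z. map_pmf (\<lambda>s. z + s) (sumZ Z m))"

text \<open>Conditional law of the waiting time J_k given X_k = i (type B):
  1 + sum_{j=1}^{M-1} Z_j with M independent of the Z_j and P(M = r) = p q^(r-1), r >= 1.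
  Here M - 1 is geometric_pmf p on {0,1,...}.\<close>
definition waitB :: "nat pmf \<Rightarrow> real \<Rightarrow> nat pmf" where
  "waitB Z p = bind_pmf (geometric_pmf p) (\<lambda>m. map_pmf Suc (sumZ Z m))"

text \<open>Joint law of (X_0,J_0),...,(X_n,J_n) of the embedded Markov chain with transition
  kernel H and waiting times, started with X_0 = i (a jump at time 0, i.e. gamma(0)=1).\<close>
fun traj :: "('s \<Rightarrow> 's pmf) \<Rightarrow> ('s \<Rightarrow> nat pmf) \<Rightarrow> 's \<Rightarrow> nat \<Rightarrow> ('s \<times> nat) list pmf" where
  "traj H W i 0 = map_pmf (\<lambda>w. [(i, w)]) (W i)"
| "traj H W i (Suc n) =
     bind_pmf (W i) (\<lambda>w. bind_pmf (H i) (\<lambda>l. map_pmf (\<lambda>xs. (i, w) # xs) (traj H W l n)))"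

text \<open>Value of the semi-Markov path Y(t) = X_n for T_n <= t < T_{n+1}, from a finite list of
  (state, waiting time) pairs; None if the list does not reach time t.\<close>
fun yval :: "('s \<times> nat) list \<Rightarrow> nat \<Rightarrow> 's option" where
  "yval [] t = None"
| "yval ((s, w) # xs) t = (if t < w then Some s else yval xs (t - w))"

text \<open>p_ij(t) = P(Y(t) = j | Y(0) = i, gamma(0) = 1) for t in N_0. Since all waiting times are
  >= 1, the first t+1 steps determine Y(t).\<close>
definition ptrans :: "('s \<Rightarrow> 's pmf) \<Rightarrow> ('s \<Rightarrow> nat pmf) \<Rightarrow> 's \<Rightarrow> 's \<Rightarrow> nat \<Rightarrow> real" where
  "ptrans H W i j t = measure_pmf.prob (traj H W i t) {xs. yval xs t = Some j}"

definition ptransZ :: "('s \<Rightarrow> 's pmf) \<Rightarrow> ('s \<Rightarrow> nat pmf) \<Rightarrow> 's \<Rightarrow> 's \<Rightarrow> int \<Rightarrow> real" where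
  "ptransZ H W i j t = (if t < 0 then 0 else ptrans H W i j (nat t))"

end

theory Submission
  imports Defs
begin

lemma prob_bind_pmf':
  "measure_pmf.prob (bind_pmf M N) A = measure_pmf.expectation M (\<lambda>x. measure_pmf.prob (N x) A)"
  unfolding measure_pmf_bind
  by (rule measure_pmf.measure_bind[where N="count_space UNIV"]) (auto simp: measure_pmf_in_subprob_algebra)

lemma integral_bind_pmf':
  fixes f :: "_ \<Rightarrow> real"
  assumes "\<And>y. \<bar>f y\<bar> \<le> B"
  shows "measure_pmf.expectation (bind_pmf M N) f = measure_pmf.expectation M (\<lambda>x. measure_pmf.expectation (N x) f)"
  unfolding measure_pmf_bind
  by (rule integral_bind[where K="count_space UNIV" and B'=1 and B=B]) (auto simp: assms measure_pmf_in_subprob_algebra)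

lemma exp_cong_supp:
  fixes f g :: "_ \<Rightarrow> real"
  assumes "\<And>x. x \<in> set_pmf M \<Longrightarrow> f x = g x"
  shows "measure_pmf.expectation M f = measure_pmf.expectation M g"
  by (rule integral_cong_AE) (auto simp: AE_measure_pmf_iff assms)

lemma abs_summable_pmf_bounded:
  fixes f :: "_ \<Rightarrow> real"
  assumes "\<And>y. \<bar>f y\<bar> \<le> B"
  shows "Infinite_Set_Sum.abs_summable_on (\<lambda>x. pmf M x * f x) UNIV"
proof (rule abs_summable_on_comparison_test[where g="\<lambda>x. pmf M x * B"])
  show "Infinite_Set_Sum.abs_summable_on (\<lambda>x. pmf M x * B) UNIV"
    by (rule abs_summable_on_cmult_left, rule pmf_abs_summable)
next
  fix x
  have "\<bar>pmf M x * f x\<bar> = pmf M x * \<bar>f x\<bar>" by (simp add: abs_mult)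
  also have "\<dots> \<le> pmf M x * B" by (rule mult_left_mono[OF assms pmf_nonneg])
  finally show "norm (pmf M x * f x) \<le> norm (pmf M x * B)" by simp
qed

lemma expectation_count_space:
  fixes f :: "_ \<Rightarrow> real"
  shows "measure_pmf.expectation M f = integral\<^sup>L (count_space UNIV) (\<lambda>x. pmf M x * f x)"
  unfolding measure_pmf_eq_density
  by (subst integral_density) auto

lemma expectation_has_sum:
  fixes f :: "_ \<Rightarrow> real"
  assumes "\<And>y. \<bar>f y\<bar> \<le> B"
  shows "((\<lambda>x. pmf M x * f x) has_sum measure_pmf.expectation M f) UNIV"
proof -
  have a: "Infinite_Set_Sum.abs_summable_on (\<lambda>x. pmf M x * f x) UNIV"
    by (rule abs_summable_pmf_bounded[OF assms])
  have "measure_pmf.expectation M f = infsetsum (\<lambda>x. pmf M x * f x) UNIV"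
    unfolding infsetsum_def by (rule expectation_count_space)
  also have "\<dots> = (\<Sum>\<^sub>\<infinity>x. pmf M x * f x)"
    by (rule infsetsum_infsum[OF a])
  finally have e: "measure_pmf.expectation M f = (\<Sum>\<^sub>\<infinity>x. pmf M x * f x)" .
  have "(\<lambda>x. pmf M x * f x) summable_on UNIV"
    apply (rule abs_summable_summable)
    using abs_summable_equivalent[of "\<lambda>x. pmf M x * f x" UNIV] a by simp
  then show ?thesis unfolding e by (rule has_sum_infsum)
qed

lemma expectation_sums:
  fixes f :: "nat \<Rightarrow> real"
  assumes "\<And>y. \<bar>f y\<bar> \<le> B"
  shows "(\<lambda>x. pmf M x * f x) sums measure_pmf.expectation M f"
proof -
  have a: "Infinite_Set_Sum.abs_summable_on (\<lambda>x. pmf M x * f x) UNIV"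
    by (rule abs_summable_pmf_bounded[OF assms])
  then have "integrable (count_space UNIV) (\<lambda>x. pmf M x * f x)"
    by (simp add: abs_summable_on_def)
  then show ?thesis unfolding expectation_count_space
    by (rule sums_integral_count_space_nat)
qed

lemma prob_le1: "\<bar>measure_pmf.prob M A\<bar> \<le> 1"
  by simp

lemma traj0_prob:
  "measure_pmf.prob (traj H W l 0) {xs. yval xs t = Some j}
   = measure_pmf.expectation (W l) (\<lambda>w. if t < w then (if l = j then 1 else 0) else 0)"
  unfolding traj.simps map_pmf_def prob_bind_pmf'
  by (rule Bochner_Integration.integral_cong) auto

lemma trajS_prob:
  "measure_pmf.prob (traj H W l (Suc n)) {xs. yval xs t = Some j}
   = measure_pmf.expectation (W l) (\<lambda>w. if t < w then (if l = j then 1 else 0) else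
        measure_pmf.expectation (H l) (\<lambda>l'. measure_pmf.prob (traj H W l' n) {xs. yval xs (t - w) = Some j}))"
  unfolding traj.simps prob_bind_pmf'
proof (rule Bochner_Integration.integral_cong[OF refl])
  fix w
  show "measure_pmf.expectation (H l) (\<lambda>x. measure_pmf.prob (map_pmf ((#) (l, w)) (traj H W x n)) {xs. yval xs t = Some j}) =
         (if t < w then (if l = j then 1 else 0) else
        measure_pmf.expectation (H l) (\<lambda>l'. measure_pmf.prob (traj H W l' n) {xs. yval xs (t - w) = Some j}))"
  proof (cases "t < w")
    case True
    then show ?thesis by (auto simp: vimage_def)
  next
    case False
    then show ?thesis by (auto simp: vimage_def)
  qed
qed

lemma traj_stable_step:
  assumes Wpos: "\<And>l w. w \<in> set_pmf (W l) \<Longrightarrow> 0 < w"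
  shows "t \<le> n \<Longrightarrow> measure_pmf.prob (traj H W l (Suc n)) {xs. yval xs t = Some j}
             = measure_pmf.prob (traj H W l n) {xs. yval xs t = Some j}"
proof (induction n arbitrary: l t)
  case 0
  then show ?case
    unfolding trajS_prob traj0_prob
    by (intro exp_cong_supp) (auto dest: Wpos)
next
  case (Suc m)
  show ?case
    unfolding trajS_prob[of H W l "Suc m"] trajS_prob[of H W l m]
  proof (intro exp_cong_supp)
    fix w assume w: "w \<in> set_pmf (W l)"
    then have "0 < w" by (rule Wpos)
    show "(if t < w then (if l = j then 1 else 0) else
        measure_pmf.expectation (H l) (\<lambda>l'. measure_pmf.prob (traj H W l' (Suc m)) {xs. yval xs (t - w) = Some j}))
      = (if t < w then (if l = j then 1 else 0) else
        measure_pmf.expectation (H l) (\<lambda>l'. measure_pmf.prob (traj H W l' m) {xs. yval xs (t - w) = Some j}))"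
      using Suc.IH[of "t - w"] Suc.prems \<open>0 < w\<close> by auto
  qed
qed

lemma traj_stable:
  assumes Wpos: "\<And>l w. w \<in> set_pmf (W l) \<Longrightarrow> 0 < w"
  shows "t \<le> n \<Longrightarrow> measure_pmf.prob (traj H W l n) {xs. yval xs t = Some j} = ptrans H W l j t"
  unfolding ptrans_def
proof (induction n rule: dec_induct)
  case base then show ?case by simp
next
  case (step n) then show ?case using traj_stable_step[OF Wpos, where t=t and n=n and l=l and j=j and H=H] by simp
qed

lemma ptrans_rec:
  assumes Wpos: "\<And>l w. w \<in> set_pmf (W l) \<Longrightarrow> 0 < w"
  shows "ptrans H W l j t = measure_pmf.expectation (W l) (\<lambda>w. if t < w then (if l = j then 1 else 0) else
        measure_pmf.expectation (H l) (\<lambda>l'. ptrans H W l' j (t - w)))"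
proof (cases t)
  case 0
  show ?thesis unfolding 0 ptrans_def[of H W l j 0] traj0_prob
    by (intro exp_cong_supp) (auto dest: Wpos)
next
  case (Suc s)
  show ?thesis unfolding Suc ptrans_def[of H W l j "Suc s"] trajS_prob
  proof (intro exp_cong_supp)
    fix w assume w: "w \<in> set_pmf (W l)"
    then have "0 < w" by (rule Wpos)
    then show "(if Suc s < w then (if l = j then 1 else 0) else
        measure_pmf.expectation (H l) (\<lambda>l'. measure_pmf.prob (traj H W l' s) {xs. yval xs (Suc s - w) = Some j}))
      = (if Suc s < w then (if l = j then 1 else 0) else
        measure_pmf.expectation (H l) (\<lambda>l'. ptrans H W l' j (Suc s - w)))"
      using traj_stable[OF Wpos, where t="Suc s - w" and n=s and j=j and H=H] by auto
  qed
qed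

definition Kp :: "nat pmf \<Rightarrow> real \<Rightarrow> nat pmf" where
  "Kp Z p = bind_pmf (geometric_pmf p) (sumZ Z)"

lemma waitB_K: "waitB Z p = map_pmf Suc (Kp Z p)"
  unfolding waitB_def Kp_def map_bind_pmf ..

lemma K_unfold:
  assumes "p \<in> {0<..1}"
  shows "Kp Z p = bind_pmf (bernoulli_pmf p)
     (\<lambda>b. if b then return_pmf 0 else bind_pmf Z (\<lambda>z. map_pmf ((+) z) (Kp Z p)))"
proof -
  have "Kp Z p = bind_pmf (bind_pmf (bernoulli_pmf p)
          (\<lambda>b. if b then return_pmf 0 else map_pmf Suc (geometric_pmf p))) (sumZ Z)"
    unfolding Kp_def by (subst geometric_bind_pmf_unfold[OF assms]) (rule refl)
  also have "\<dots> = bind_pmf (bernoulli_pmf p)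
     (\<lambda>b. if b then return_pmf 0 else bind_pmf Z (\<lambda>z. map_pmf ((+) z) (Kp Z p)))"
    unfolding bind_assoc_pmf
  proof (intro bind_pmf_cong refl)
    fix b :: bool
    show "bind_pmf (if b then return_pmf 0 else map_pmf Suc (geometric_pmf p)) (sumZ Z) =
          (if b then return_pmf 0 else bind_pmf Z (\<lambda>z. map_pmf ((+) z) (Kp Z p)))"
    proof (cases b)
      case True then show ?thesis by (simp add: bind_return_pmf)
    next
      case False
      have "bind_pmf (map_pmf Suc (geometric_pmf p)) (sumZ Z)
          = bind_pmf (geometric_pmf p) (\<lambda>m. bind_pmf Z (\<lambda>z. map_pmf ((+) z) (sumZ Z m)))"
        by (simp add: bind_map_pmf)
      also have "\<dots> = bind_pmf Z (\<lambda>z. bind_pmf (geometric_pmf p) (\<lambda>m. map_pmf ((+) z) (sumZ Z m)))"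
        by (rule bind_commute_pmf)
      also have "\<dots> = bind_pmf Z (\<lambda>z. map_pmf ((+) z) (Kp Z p))"
        unfolding Kp_def map_bind_pmf ..
      finally show ?thesis using False by simp
    qed
  qed
  finally show ?thesis .
qed

lemma exp_01:
  fixes f :: "_ \<Rightarrow> real"
  assumes "\<And>x. 0 \<le> f x \<and> f x \<le> 1"
  shows "0 \<le> measure_pmf.expectation M f \<and> measure_pmf.expectation M f \<le> 1"
proof
  show "0 \<le> measure_pmf.expectation M f" using assms by (simp add: integral_nonneg)
  have "integrable M f"
    by (rule measure_pmf.integrable_const_bound[where B=1]) (use assms in auto)
  then have "measure_pmf.expectation M f \<le> measure_pmf.expectation M (\<lambda>_. 1)"
    by (intro integral_mono) (use assms in auto)
  then show "measure_pmf.expectation M f \<le> 1" by simp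
qed

lemma ptrans_01: "0 \<le> ptrans H W l j t \<and> ptrans H W l j t \<le> 1"
  unfolding ptrans_def by simp

lemma G_rec:
  fixes H :: "'s \<Rightarrow> 's pmf" and p :: "'s \<Rightarrow> real" and Z :: "nat pmf" and l j :: 's and t :: nat
  assumes p_range: "\<And>i. 0 < p i \<and> p i < 1"
  defines "W \<equiv> (\<lambda>k. waitB Z (p k))"
  defines "\<delta> \<equiv> (if l = j then 1 else 0 :: real)"
  defines "h \<equiv> (\<lambda>u. measure_pmf.expectation (H l) (\<lambda>l'. ptrans H W l' j u))"
  defines "\<phi> \<equiv> (\<lambda>t k. if t < Suc k then \<delta> else h (t - Suc k))"
  shows "ptrans H W l j t = p l * \<phi> t 0 +
     (1 - p l) * measure_pmf.expectation Z (\<lambda>z. if t \<le> z then \<delta> else ptrans H W l j (t - z))"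
proof -
  have Wpos: "\<And>l w. w \<in> set_pmf (W l) \<Longrightarrow> 0 < w"
    unfolding W_def waitB_K by auto
  have h01: "0 \<le> h u \<and> h u \<le> 1" for u
    unfolding h_def by (rule exp_01) (rule ptrans_01)
  have phib: "\<bar>\<phi> t k\<bar> \<le> 1" for t k
    using h01 unfolding \<phi>_def \<delta>_def by (auto simp: abs_le_iff)
  have Wl: "W l = map_pmf Suc (Kp Z (p l))" by (simp add: W_def waitB_K)
  have g: "ptrans H W l j t = measure_pmf.expectation (Kp Z (p l)) (\<phi> t)" for t
  proof -
    have "ptrans H W l j t = measure_pmf.expectation (W l) (\<lambda>w. if t < w then (if l = j then 1 else 0) else
        measure_pmf.expectation (H l) (\<lambda>l'. ptrans H W l' j (t - w)))"
      by (rule ptrans_rec[OF Wpos])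
    then show ?thesis unfolding \<phi>_def h_def \<delta>_def by (simp add: Wl)
  qed
  have pr: "p l \<in> {0<..1}" "0 \<le> p l" "p l \<le> 1" using p_range[of l] by auto
  have "measure_pmf.expectation (Kp Z (p l)) (\<phi> t)
      = measure_pmf.expectation (bernoulli_pmf (p l)) (\<lambda>b. measure_pmf.expectation
           (if b then return_pmf 0 else bind_pmf Z (\<lambda>z. map_pmf ((+) z) (Kp Z (p l)))) (\<phi> t))"
    by (subst K_unfold[OF pr(1)]) (rule integral_bind_pmf'[OF phib])
  also have "\<dots> = \<phi> t 0 * p l + measure_pmf.expectation (bind_pmf Z (\<lambda>z. map_pmf ((+) z) (Kp Z (p l)))) (\<phi> t) * (1 - p l)"
    using pr by simp
  also have "measure_pmf.expectation (bind_pmf Z (\<lambda>z. map_pmf ((+) z) (Kp Z (p l)))) (\<phi> t)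
      = measure_pmf.expectation Z (\<lambda>z. measure_pmf.expectation (Kp Z (p l)) (\<lambda>k. \<phi> t (z + k)))"
    by (subst integral_bind_pmf'[OF phib]) simp
  also have "\<dots> = measure_pmf.expectation Z (\<lambda>z. if t \<le> z then \<delta> else ptrans H W l j (t - z))"
  proof (rule Bochner_Integration.integral_cong[OF refl])
    fix z
    show "measure_pmf.expectation (Kp Z (p l)) (\<lambda>k. \<phi> t (z + k)) = (if t \<le> z then \<delta> else ptrans H W l j (t - z))"
    proof (cases "t \<le> z")
      case True
      then have "\<And>k. \<phi> t (z + k) = \<delta>" unfolding \<phi>_def by auto
      then show ?thesis using True by simp
    next
      case False
      then have "\<And>k. \<phi> t (z + k) = \<phi> (t - z) k" unfolding \<phi>_def by auto
      then show ?thesis using False g[of "t - z"] by simp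
    qed
  qed
  finally show ?thesis using g[of t] by (simp add: algebra_simps)
qed

lemma prob_atLeast_split:
  "measure_pmf.prob Z {t..} = pmf Z (t::nat) + measure_pmf.prob Z {t<..}"
proof -
  have "{t..} = {t} \<union> {t<..}" by auto
  then have "measure_pmf.prob Z {t..} = measure_pmf.prob Z ({t} \<union> {t<..})" by simp
  also have "\<dots> = measure_pmf.prob Z {t} + measure_pmf.prob Z {t<..}"
    by (rule measure_pmf.finite_measure_Union) auto
  finally show ?thesis by (simp add: measure_pmf_single)
qed

lemma exp_split:
  fixes g :: "nat \<Rightarrow> real"
  assumes "\<And>n. \<bar>g n\<bar> \<le> 1"
  shows "measure_pmf.expectation Z (\<lambda>z. if t \<le> z then d else g (t - z))
     = d * measure_pmf.prob Z {t..} + (\<Sum>z<t. g (t - z) * pmf Z z)"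
proof -
  have i1: "integrable (measure_pmf Z) (\<lambda>z. d * indicator {t..} z)"
    by (rule measure_pmf.integrable_const_bound[where B="\<bar>d\<bar>"]) (auto simp: indicator_def)
  have i2: "integrable (measure_pmf Z) (\<lambda>z. if z < t then g (t - z) else 0)"
    by (rule measure_pmf.integrable_const_bound[where B=1]) (use assms in auto)
  have "measure_pmf.expectation Z (\<lambda>z. if t \<le> z then d else g (t - z))
      = measure_pmf.expectation Z (\<lambda>z. d * indicator {t..} z + (if z < t then g (t - z) else 0))"
    by (rule Bochner_Integration.integral_cong) (auto simp: indicator_def)
  also have "\<dots> = measure_pmf.expectation Z (\<lambda>z. d * indicator {t..} z)
      + measure_pmf.expectation Z (\<lambda>z. if z < t then g (t - z) else 0)"
    by (rule Bochner_Integration.integral_add[OF i1 i2])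
  also have "measure_pmf.expectation Z (\<lambda>z. d * indicator {t..} z) = d * measure_pmf.prob Z {t..}"
    by simp
  also have "measure_pmf.expectation Z (\<lambda>z. if z < t then g (t - z) else 0) = (\<Sum>z<t. g (t - z) * pmf Z z)"
    by (subst integral_measure_pmf_real[where A="{..<t}"]) (auto intro!: sum.cong split: if_splits)
  finally show ?thesis .
qed

lemma alg_key:
  fixes p g h d a A S :: real
  assumes "1 - p \<noteq> 0" "g = p * h + (1 - p) * (d * (a + A) + S)"
  shows "g - (S + d * a) - A * d = p / (1 - p) * h - p / (1 - p) * g"
proof -
  have "(1 - p) * (g - (S + d * a) - A * d) = p * h - p * g"
    using assms(2) by (simp add: algebra_simps)
  then have "g - (S + d * a) - A * d = (p * h - p * g) / (1 - p)"
    using assms(1) by (metis nonzero_mult_div_cancel_left)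
  then show ?thesis by (simp add: diff_divide_distrib)
qed

theorem mainTheorem6:
  fixes H :: "'s \<Rightarrow> 's pmf" and p :: "'s \<Rightarrow> real" and Z :: "nat pmf"
    and i j :: 's and t :: nat
  assumes noself: "\<And>i. pmf (H i) i = 0"
    and p_range: "\<And>i. 0 < p i \<and> p i < 1"
    and Z_pos: "set_pmf Z \<subseteq> {1..}"
  defines "lam \<equiv> \<lambda>i. p i / (1 - p i)"
    and "P \<equiv> ptransZ H (\<lambda>k. waitB Z (p k))"
  shows "(\<Sum>\<tau>. (P i j (int t) - P i j (int t - int \<tau>)) * pmf Z \<tau>)
           - measure_pmf.prob Z {t<..} * P i j 0
         = (\<Sum>\<^sub>\<infinity>l. lam i * (pmf (H i) l * P l j (int t - 1)
                              - (if i = l then 1 else 0) * P l j (int t)))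
           + lam i * P i j 0 * (if t = 0 then 1 else 0)"
proof -
  define W where "W = (\<lambda>k. waitB Z (p k))"
  define g where "g = ptrans H W i j"
  define \<delta> where "\<delta> = (if i = j then 1 else 0 :: real)"
  define h where "h = (\<lambda>u. measure_pmf.expectation (H i) (\<lambda>l'. ptrans H W l' j u))"
  define c where "c = (\<lambda>\<tau>. if \<tau> \<le> t then g (t - \<tau>) else 0)"
  have P_eq: "P = ptransZ H W" unfolding P_def W_def ..
  have gb: "\<bar>g n\<bar> \<le> 1" for n unfolding g_def using ptrans_01[of H W i j n] by auto
  have cb: "\<bar>c n\<bar> \<le> 1" for n unfolding c_def using gb by auto
  have Pb: "\<bar>P l j u\<bar> \<le> 1" for l u
    unfolding P_eq ptransZ_def using ptrans_01[of H W l j] by auto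
  have pr: "0 < p i" "p i < 1" using p_range[of i] by auto
  have P1: "P i j (int t) = g t" unfolding P_eq ptransZ_def g_def by simp
  have P2: "P i j (int t - int \<tau>) = c \<tau>" for \<tau>
    unfolding P_eq ptransZ_def g_def c_def by (auto simp: nat_diff_distrib)
  have G: "g u = p i * (if u < Suc 0 then \<delta> else h (u - Suc 0)) +
     (1 - p i) * measure_pmf.expectation Z (\<lambda>z. if u \<le> z then \<delta> else g (u - z))" for u
    using G_rec[OF p_range, where H=H and Z=Z and l=i and j=j and t=u] unfolding g_def \<delta>_def h_def W_def by simp
  have g0: "g 0 = \<delta>"
    using G[of 0] by (simp add: algebra_simps)
  have P0: "P i j 0 = \<delta>" using g0 unfolding P_eq ptransZ_def g_def by simp
  have s1: "(\<lambda>\<tau>. pmf Z \<tau> * g t) sums g t"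
    using expectation_sums[of "\<lambda>_. g t" 1 Z] gb by simp
  have s2: "(\<lambda>\<tau>. pmf Z \<tau> * c \<tau>) sums (measure_pmf.expectation Z c)"
    using expectation_sums[of c 1 Z] cb by simp
  have Ec: "measure_pmf.expectation Z c = (\<Sum>\<tau>\<le>t. g (t - \<tau>) * pmf Z \<tau>)"
    by (subst integral_measure_pmf_real[where A="{..t}"]) (auto simp: c_def intro!: sum.cong split: if_splits)
  have "(\<lambda>\<tau>. (P i j (int t) - P i j (int t - int \<tau>)) * pmf Z \<tau>) sums (g t - measure_pmf.expectation Z c)"
    unfolding P1 P2 using sums_diff[OF s1 s2] by (simp add: algebra_simps)
  then have L: "(\<Sum>\<tau>. (P i j (int t) - P i j (int t - int \<tau>)) * pmf Z \<tau>) = g t - (\<Sum>\<tau>\<le>t. g (t - \<tau>) * pmf Z \<tau>)"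
    unfolding Ec by (rule sums_unique[symmetric])
  define hh where "hh = measure_pmf.expectation (H i) (\<lambda>l. P l j (int t - 1))"
  have hh_eq: "hh = (if t = 0 then 0 else h (t - 1))"
    unfolding hh_def h_def P_eq ptransZ_def by (auto simp: nat_diff_distrib)
  have r1: "((\<lambda>l. lam i * (pmf (H i) l * P l j (int t - 1))) has_sum (lam i * hh)) UNIV"
    unfolding hh_def by (rule has_sum_cmult_right, rule expectation_has_sum[where B=1]) (rule Pb)
  have r2: "((\<lambda>l. (- lam i) * ((if i = l then 1 else 0) * P l j (int t))) has_sum ((- lam i) * g t)) UNIV"
  proof (rule has_sum_cmult_right)
    have "((\<lambda>l. (if i = l then 1 else 0) * P l j (int t)) has_sum g t) UNIV
        \<longleftrightarrow> ((\<lambda>l. (if i = l then 1 else 0) * P l j (int t)) has_sum g t) {i}"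
      by (rule has_sum_cong_neutral) auto
    moreover have "((\<lambda>l. (if i = l then 1 else 0) * P l j (int t)) has_sum
        (\<Sum>l\<in>{i}. (if i = l then 1 else 0) * P l j (int t))) {i}"
      by (rule has_sum_finite) simp
    ultimately show "((\<lambda>l. (if i = l then 1 else 0) * P l j (int t)) has_sum g t) UNIV"
      using P1 by simp
  qed
  have "((\<lambda>l. lam i * (pmf (H i) l * P l j (int t - 1))
          - (if i = l then 1 else 0) * lam i * P l j (int t)) has_sum (lam i * hh - lam i * g t)) UNIV"
    using has_sum_add[OF r1 r2] by (simp add: algebra_simps)
  then have R: "(\<Sum>\<^sub>\<infinity>l. lam i * (pmf (H i) l * P l j (int t - 1))
                              - lam i * ((if i = l then 1 else 0) * P l j (int t))) = lam i * hh - lam i * g t"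
    by (intro infsumI) (simp add: algebra_simps)
  have R': "(\<Sum>\<^sub>\<infinity>l. lam i * (pmf (H i) l * P l j (int t - 1)
                              - (if i = l then 1 else 0) * P l j (int t))) = lam i * hh - lam i * g t"
    using R by (simp add: algebra_simps)
  have spl: "measure_pmf.prob Z {t..} = pmf Z t + measure_pmf.prob Z {t<..}"
    by (rule prob_atLeast_split)
  show ?thesis
  proof (cases t)
    case 0
    have "measure_pmf.prob Z {0..} = 1" by simp
    then have "\<delta> = \<delta> * pmf Z 0 + \<delta> * measure_pmf.prob Z {0<..}"
      using spl[unfolded 0] by (metis distrib_left mult_1_right)
    then show ?thesis unfolding L R' P0 hh_eq using 0 g0
      by (simp add: algebra_simps)
  next
    case (Suc s)
    have E: "measure_pmf.expectation Z (\<lambda>z. if t \<le> z then \<delta> else g (t - z))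
        = \<delta> * measure_pmf.prob Z {t..} + (\<Sum>z<t. g (t - z) * pmf Z z)"
      by (rule exp_split[OF gb])
    have Gt: "g t = p i * h s + (1 - p i) * (\<delta> * measure_pmf.prob Z {t..} + (\<Sum>z<t. g (t - z) * pmf Z z))"
      using G[of t] E Suc by simp
    have sumt: "(\<Sum>\<tau>\<le>t. g (t - \<tau>) * pmf Z \<tau>) = (\<Sum>z<t. g (t - z) * pmf Z z) + \<delta> * pmf Z t"
      using g0 by (simp add: lessThan_Suc_atMost[symmetric] Suc)
    have q: "1 - p i \<noteq> 0" using pr by simp
    have key: "g t - ((\<Sum>z<t. g (t - z) * pmf Z z) + \<delta> * pmf Z t) - measure_pmf.prob Z {t<..} * \<delta>
        = p i / (1 - p i) * h s - p i / (1 - p i) * g t"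
      using alg_key[OF q Gt[unfolded spl]] .
    show ?thesis unfolding L R' P0 hh_eq sumt
      using key Suc by (simp add: lam_def)
  qed
qed

end
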